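(* Let $G$ be an additive group and let $(X,\rho)$ be the metric space described below. The map $\varphi:X\to(0,+\infty)$, $\varphi((f,a_f))=a_f$, is a submetry, i.e. it maps every open ball $B(x,r)$ in $X$ onto the ball of the same radius $r$ centered at $\varphi(x)$ in $(0,+\infty)$ (with the standard metric $|s-t|$).
   Context: A function on an interval $(\alpha,\beta)$ is piecewise constant from the left if for every $x$ there is $\varepsilon>0$ with $f$ constant on $[x-\varepsilon,x]$. $X$ is the set of pairs $(f,a_f)$, $a_f>0$ real, $f:(a_f,+\infty)\to G$ piecewise constant from the left with $f|_{(b_f,+\infty)}\equiv0$ for some $b_f\ge a_f$. Order: $(f,a_f)\preceq(g,a_g)$ iff $a_f\le a_g$ and $f|_{(a_g,+\infty)}=g$; any two elements $p,q$ have a supremum $p\vee q$. Metric: $\rho((f,a_f),(g,a_g))=|a_f-a_g|$ if the pairs are comparable, and $\rho(p,q)=\rho(p,p\vee q)+\rho(p\vee q,q)$ otherwise. *)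

theory Defs
  imports "HOL-Analysis.Analysis"
begin

text \<open>An element (f, a) of X: a > 0 and f : (a,+\<infinity>) \<rightarrow> G. Since HOL functions are
total, f is represented by a total function that is normalised to 0 on (-\<infinity>, a].\<close>

definition pc_left :: "real \<Rightarrow> (real \<Rightarrow> 'g) \<Rightarrow> bool" where
  "pc_left a f \<longleftrightarrow> (\<forall>x>a. \<exists>\<epsilon>>0. x - \<epsilon> > a \<and> (\<forall>y\<in>{x-\<epsilon>..x}. f y = f x))"

definition Xset :: "((real \<Rightarrow> 'g::group_add) \<times> real) set" where
  "Xset = {(f, a). a > 0 \<and> (\<forall>x\<le>a. f x = 0) \<and> pc_left a f \<and>
                    (\<exists>b\<ge>a. \<forall>x>b. f x = 0)}"

definition Xle :: "((real \<Rightarrow> 'g::group_add) \<times> real) \<Rightarrow> ((real \<Rightarrow> 'g) \<times> real) \<Rightarrow> bool" where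
  "Xle p q \<longleftrightarrow> snd p \<le> snd q \<and> (\<forall>x>snd q. fst p x = fst q x)"

definition Xsup :: "((real \<Rightarrow> 'g::group_add) \<times> real) \<Rightarrow> ((real \<Rightarrow> 'g) \<times> real) \<Rightarrow> ((real \<Rightarrow> 'g) \<times> real)" where
  "Xsup p q = (THE s. s \<in> Xset \<and> Xle p s \<and> Xle q s \<and>
                      (\<forall>t\<in>Xset. Xle p t \<and> Xle q t \<longrightarrow> Xle s t))"

definition Xdist :: "((real \<Rightarrow> 'g::group_add) \<times> real) \<Rightarrow> ((real \<Rightarrow> 'g) \<times> real) \<Rightarrow> real" where
  "Xdist p q = (if Xle p q \<or> Xle q p then \<bar>snd p - snd q\<bar>
                else \<bar>snd p - snd (Xsup p q)\<bar> + \<bar>snd (Xsup p q) - snd q\<bar>)"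

end

theory Submission
  imports Defs
begin

lemma dist_ge: "\<bar>snd p - snd q\<bar> \<le> Xdist p q"
  unfolding Xdist_def by auto

lemma up_mem:
  assumes "(f, a) \<in> Xset" and "t \<ge> a"
  shows "((\<lambda>s. if s \<le> t then 0 else f s), t) \<in> Xset"
proof -
  from assms(1) have a: "a > 0" "\<forall>x\<le>a. f x = 0" "pc_left a f" "\<exists>b\<ge>a. \<forall>x>b. f x = 0"
    unfolding Xset_def by auto
  obtain b where b: "b \<ge> a" "\<forall>x>b. f x = 0" using a(4) by blast
  have pc: "pc_left t (\<lambda>s. if s \<le> t then 0 else f s)"
    unfolding pc_left_def
  proof (intro allI impI)
    fix x assume x: "x > t"
    then have "x > a" using assms(2) by auto
    then obtain e where e: "e > 0" "x - e > a" "\<forall>y\<in>{x-e..x}. f y = f x"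
      using a(3) unfolding pc_left_def by blast
    define e' where "e' = min e ((x - t)/2)"
    have "e' > 0" using e x by (auto simp: e'_def)
    moreover have "x - e' > t"
    proof -
      have "e' \<le> (x - t)/2" unfolding e'_def by (rule min.cobounded2)
      moreover have "(x - t)/2 < x - t" using x by (simp add: field_simps)
      ultimately show ?thesis by linarith
    qed
    moreover have "\<forall>y\<in>{x-e'..x}. (if y \<le> t then 0 else f y) = (if x \<le> t then 0 else f x)"
    proof
      fix y assume "y \<in> {x-e'..x}"
      then have "y > t" "y \<in> {x-e..x}" using \<open>x - e' > t\<close> by (auto simp: e'_def)
      then have "f y = f x" using e(3) by blast
      then show "(if y \<le> t then 0 else f y) = (if x \<le> t then 0 else f x)" using \<open>y > t\<close> x by simp
    qed
    ultimately show "\<exists>\<epsilon>>0. x - \<epsilon> > t \<and> (\<forall>y\<in>{x-\<epsilon>..x}. (if y \<le> t then 0 else f y) = (if x \<le> t then 0 else f x))"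
      by blast
  qed
  have "\<exists>b'\<ge>t. \<forall>x>b'. (if x \<le> t then 0 else f x) = 0"
  proof (rule exI[of _ "max b t"], intro conjI allI impI)
    fix x assume "x > max b t"
    then show "(if x \<le> t then 0 else f x) = 0" using b(2) by simp
  qed simp
  moreover have "\<forall>x\<le>t. (if x \<le> t then 0 else f x) = 0" by simp
  moreover have "t > 0" using a(1) assms(2) by simp
  ultimately show ?thesis unfolding Xset_def using pc by simp
qed

lemma down_mem:
  assumes "(f, a) \<in> Xset" and "t \<le> a" and "t > 0"
  shows "(f, t) \<in> Xset"
proof -
  from assms(1) have a: "a > 0" "\<forall>x\<le>a. f x = 0" "pc_left a f" "\<exists>b\<ge>a. \<forall>x>b. f x = 0"
    unfolding Xset_def by auto
  have pc: "pc_left t f"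
    unfolding pc_left_def
  proof (intro allI impI)
    fix x assume x: "x > t"
    show "\<exists>\<epsilon>>0. x - \<epsilon> > t \<and> (\<forall>y\<in>{x-\<epsilon>..x}. f y = f x)"
    proof (cases "x \<le> a")
      case True
      have "x - (x - t)/2 > t" using x by (simp add: field_simps)
      moreover have "(x - t)/2 > 0" using x by simp
      moreover have "\<forall>y\<in>{x-(x - t)/2..x}. f y = f x"
      proof
        fix y assume "y \<in> {x-(x - t)/2..x}"
        then have "y \<le> a" using True by simp
        then show "f y = f x" using a(2) True by simp
      qed
      ultimately show ?thesis by blast
    next
      case False
      then have "x > a" by simp
      then obtain e where e: "e > 0" "x - e > a" "\<forall>y\<in>{x-e..x}. f y = f x"
        using a(3) unfolding pc_left_def by blast
      moreover have "x - e > t" using e(2) assms(2) by simp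
      ultimately show ?thesis by blast
    qed
  qed
  obtain b where b: "b \<ge> a" "\<forall>x>b. f x = 0" using a(4) by blast
  have "\<exists>b\<ge>t. \<forall>x>b. f x = 0" using b assms(2) by (intro exI[of _ b]) simp
  moreover have "\<forall>x\<le>t. f x = 0" using a(2) assms(2) by simp
  ultimately show ?thesis unfolding Xset_def using assms(3) pc by simp
qed

theorem lemma7:
  fixes x :: "(real \<Rightarrow> 'g::group_add) \<times> real" and r :: real
  assumes "x \<in> Xset" and "r > 0"
  shows "snd ` {y \<in> Xset. Xdist x y < r} = {t. t > 0 \<and> \<bar>t - snd x\<bar> < r}"
proof
  show "snd ` {y \<in> Xset. Xdist x y < r} \<subseteq> {t. t > 0 \<and> \<bar>t - snd x\<bar> < r}"
  proof
    fix t assume "t \<in> snd ` {y \<in> Xset. Xdist x y < r}"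
    then obtain y where y: "y \<in> Xset" "Xdist x y < r" "t = snd y" by auto
    have "snd y > 0" using y(1) unfolding Xset_def by auto
    moreover have "\<bar>snd x - snd y\<bar> \<le> Xdist x y" by (rule dist_ge)
    ultimately show "t \<in> {t. t > 0 \<and> \<bar>t - snd x\<bar> < r}" using y by auto
  qed
next
  show "{t. t > 0 \<and> \<bar>t - snd x\<bar> < r} \<subseteq> snd ` {y \<in> Xset. Xdist x y < r}"
  proof
    fix t assume t: "t \<in> {t. t > 0 \<and> \<bar>t - snd x\<bar> < r}"
    obtain f a where x: "x = (f, a)" by (cases x)
    have xs: "(f, a) \<in> Xset" using assms(1) x by simp
    have fz: "\<forall>s\<le>a. f s = 0" using xs unfolding Xset_def by auto
    show "t \<in> snd ` {y \<in> Xset. Xdist x y < r}"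
    proof (cases "t \<ge> a")
      case True
      let ?y = "((\<lambda>s. if s \<le> t then 0 else f s), t)"
      have "?y \<in> Xset" using up_mem[OF xs True] .
      moreover have "Xle x ?y" using True x unfolding Xle_def by auto
      then have "Xdist x ?y = \<bar>a - t\<bar>" using x unfolding Xdist_def by auto
      ultimately have "?y \<in> {y \<in> Xset. Xdist x y < r}" using t x by (simp add: abs_minus_commute)
      then show ?thesis by (rule image_eqI[rotated]) simp
    next
      case False
      let ?y = "(f, t)"
      have "?y \<in> Xset" using down_mem[OF xs] False t by auto
      moreover have "Xle ?y x" using False x unfolding Xle_def by auto
      then have "Xdist x ?y = \<bar>a - t\<bar>" using x unfolding Xdist_def by auto
      ultimately have "?y \<in> {y \<in> Xset. Xdist x y < r}" using t x by (simp add: abs_minus_commute)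
      then show ?thesis by (rule image_eqI[rotated]) simp
    qed
  qed
qed

end
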